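(* For all $n\ge1$, $p_n(1221,1232)=p_n(1221,1223)=1+(n-1)2^{n-2}$.
   Context: Set partitions of $[n]$ are written in canonical sequential form (restricted growth words $\pi_1\cdots\pi_n$ with $\pi_1=1$, $\pi_{i+1}\le\max(\pi_1,\dots,\pi_i)+1$). A partition contains a pattern if it has a subsequence order-isomorphic to it; $p_n(T)$ counts partitions of $[n]$ avoiding every pattern in $T$. *)

theory Defs
  imports Main "HOL-Library.Sublist"
begin

text \<open>Canonical sequential form (restricted growth word) of a set partition of [n]:
  a word pi_1 ... pi_n of positive integers with pi_1 = 1 and
  pi_(i+1) <= max(pi_1,...,pi_i) + 1.  Positions are 0-based in the list.\<close>
definition is_rgw :: "nat \<Rightarrow> nat list \<Rightarrow> bool" where
  "is_rgw n w \<longleftrightarrow> length w = n \<and> (\<forall>x\<in>set w. 1 \<le> x) \<and>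
     (n > 0 \<longrightarrow> w ! 0 = 1) \<and>
     (\<forall>i. i + 1 < n \<longrightarrow> w ! (i + 1) \<le> Max (set (take (i + 1) w)) + 1)"

definition order_iso :: "nat list \<Rightarrow> nat list \<Rightarrow> bool" where
  "order_iso s p \<longleftrightarrow> length s = length p \<and>
     (\<forall>a < length s. \<forall>b < length s. (s ! a < s ! b \<longleftrightarrow> p ! a < p ! b) \<and>
                                     (s ! a = s ! b \<longleftrightarrow> p ! a = p ! b))"

definition contains :: "nat list \<Rightarrow> nat list \<Rightarrow> bool" where
  "contains w p \<longleftrightarrow> (\<exists>s. subseq s w \<and> order_iso s p)"

definition pn :: "nat \<Rightarrow> nat list set \<Rightarrow> nat" where
  "pn n T = card {w. is_rgw n w \<and> (\<forall>p\<in>T. \<not> contains w p)}"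

end

theory Submission
  imports Defs
begin


lemma subseq_snoc_iff:
  "subseq xs (ys @ [z]) \<longleftrightarrow> subseq xs ys \<or> (\<exists>xs1. xs = xs1 @ [z] \<and> subseq xs1 ys)"
proof
  assume "subseq xs (ys @ [z])"
  then obtain xs1 xs2 where "xs = xs1 @ xs2" "subseq xs1 ys" "subseq xs2 [z]"
    by (auto simp: subseq_append_iff)
  moreover have "xs2 = [] \<or> xs2 = [z]" using \<open>subseq xs2 [z]\<close>
    by (cases xs2) (auto split: if_splits)
  ultimately show "subseq xs ys \<or> (\<exists>xs1. xs = xs1 @ [z] \<and> subseq xs1 ys)" by auto
next
  assume "subseq xs ys \<or> (\<exists>xs1. xs = xs1 @ [z] \<and> subseq xs1 ys)"
  then show "subseq xs (ys @ [z])"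
    by (auto intro: subseq_rev_drop_many list_emb_append_mono)
qed

lemma oi1221: "order_iso [a,b,c,d] [1,2,2,1] \<longleftrightarrow> a < b \<and> c = b \<and> d = a"
  unfolding order_iso_def by (simp add: All_less_Suc2) linarith
lemma oi1232: "order_iso [a,b,c,d] [1,2,3,2] \<longleftrightarrow> a < b \<and> b < c \<and> d = b"
  unfolding order_iso_def by (simp add: All_less_Suc2) linarith
lemma oi1223: "order_iso [a,b,c,d] [1,2,2,3] \<longleftrightarrow> a < b \<and> c = b \<and> b < d"
  unfolding order_iso_def by (simp add: All_less_Suc2) linarith

lemma len4: "length s = 4 \<Longrightarrow> \<exists>a b c d. s = [a,b,c,d]"
  by (cases s; cases "tl s"; cases "tl (tl s)"; cases "tl (tl (tl s))"; auto)

lemma oi_len: "order_iso s p \<Longrightarrow> length s = length p" by (simp add: order_iso_def)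

lemma contains4: "length p = 4 \<Longrightarrow> contains w p \<longleftrightarrow> (\<exists>a b c d. subseq [a,b,c,d] w \<and> order_iso [a,b,c,d] p)"
  unfolding contains_def using len4 oi_len by metis

lemma c1221: "contains w [1,2,2,1] \<longleftrightarrow> (\<exists>a b. a < b \<and> subseq [a,b,b,a] w)"
  using contains4[of "[1,2,2,1]" w] oi1221 by auto
lemma c1232: "contains w [1,2,3,2] \<longleftrightarrow> (\<exists>a b c. a < b \<and> b < c \<and> subseq [a,b,c,b] w)"
  using contains4[of "[1,2,3,2]" w] oi1232 by auto
lemma c1223: "contains w [1,2,2,3] \<longleftrightarrow> (\<exists>a b c. a < b \<and> b < c \<and> subseq [a,b,b,c] w)"
  using contains4[of "[1,2,2,3]" w] oi1223 by auto

lemma rgw_len: "is_rgw n w \<Longrightarrow> length w = n" by (simp add: is_rgw_def)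

lemma rgw_snoc:
  assumes "length w = n"
  shows "is_rgw (Suc n) (w@[x]) \<longleftrightarrow> is_rgw n w \<and> 1 \<le> x \<and> (n = 0 \<longrightarrow> x = 1) \<and> (n > 0 \<longrightarrow> x \<le> Max (set w) + 1)"
proof -
  have A: "(\<forall>i. i + 1 < Suc n \<longrightarrow> (w@[x]) ! (i + 1) \<le> Max (set (take (i + 1) (w@[x]))) + 1)
     \<longleftrightarrow> (\<forall>i. i + 1 < n \<longrightarrow> w ! (i + 1) \<le> Max (set (take (i + 1) w)) + 1) \<and> (n > 0 \<longrightarrow> x \<le> Max (set w) + 1)"
  proof
    assume H: "\<forall>i. i + 1 < Suc n \<longrightarrow> (w@[x]) ! (i + 1) \<le> Max (set (take (i + 1) (w@[x]))) + 1"
    show "(\<forall>i. i + 1 < n \<longrightarrow> w ! (i + 1) \<le> Max (set (take (i + 1) w)) + 1) \<and> (n > 0 \<longrightarrow> x \<le> Max (set w) + 1)"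
    proof (intro conjI allI impI)
      fix i assume "i + 1 < n"
      with H[rule_format, of i] assms show "w ! (i + 1) \<le> Max (set (take (i + 1) w)) + 1"
        by (simp add: nth_append)
    next
      assume "n > 0"
      with H[rule_format, of "n - 1"] assms show "x \<le> Max (set w) + 1"
        by (simp add: nth_append)
    qed
  next
    assume H: "(\<forall>i. i + 1 < n \<longrightarrow> w ! (i + 1) \<le> Max (set (take (i + 1) w)) + 1) \<and> (n > 0 \<longrightarrow> x \<le> Max (set w) + 1)"
    show "\<forall>i. i + 1 < Suc n \<longrightarrow> (w@[x]) ! (i + 1) \<le> Max (set (take (i + 1) (w@[x]))) + 1"
    proof (intro allI impI)
      fix i assume i: "i + 1 < Suc n"
      show "(w@[x]) ! (i + 1) \<le> Max (set (take (i + 1) (w@[x]))) + 1"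
      proof (cases "i + 1 < n")
        case True then show ?thesis using H assms by (simp add: nth_append)
      next
        case False then have "i + 1 = n" using i by simp
        then show ?thesis using H assms by (simp add: nth_append)
      qed
    qed
  qed
  have B: "n > 0 \<Longrightarrow> (w@[x]) ! 0 = w ! 0" using assms by (simp add: nth_append)
  show ?thesis unfolding is_rgw_def using A B assms
    by (cases n) auto
qed

lemma rgw_induct[consumes 2, case_names one snoc]:
  assumes "is_rgw n w" "n \<ge> 1" "P [1]"
    "\<And>w x n. is_rgw n w \<Longrightarrow> n \<ge> 1 \<Longrightarrow> P w \<Longrightarrow> 1 \<le> x \<Longrightarrow> x \<le> Max (set w) + 1 \<Longrightarrow> P (w@[x])"
  shows "P w"
  using assms(1,2)
proof (induction n arbitrary: w)
  case 0 then show ?case by simp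
next
  case (Suc n)
  have "length w = Suc n" using Suc.prems rgw_len by blast
  then obtain v x where w: "w = v @ [x]" by (metis length_Suc_conv_rev)
  have lv: "length v = n" using \<open>length w = Suc n\<close> w by simp
  note R = rgw_snoc[OF lv, of x] Suc.prems(1)[unfolded w]
  show ?case
  proof (cases n)
    case 0 then show ?thesis using R w lv assms(3) by auto
  next
    case (Suc k)
    then show ?thesis using R w Suc.IH[of v] assms(4)[of n v x] by auto
  qed
qed

lemma rgw_one: "is_rgw 1 w \<longleftrightarrow> w = [1]"
  using rgw_snoc[of "[]" 0] by (cases w rule: rev_cases) (auto simp: is_rgw_def)

lemma rgw_nonempty: "is_rgw n w \<Longrightarrow> n \<ge> 1 \<Longrightarrow> w \<noteq> []"
  using rgw_len by fastforce

lemma rgw_interval: "is_rgw n w \<Longrightarrow> n \<ge> 1 \<Longrightarrow> set w = {1..Max (set w)}"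
proof (induction rule: rgw_induct)
  case one then show ?case by simp
next
  case (snoc w x n)
  have ne: "w \<noteq> []" using snoc rgw_nonempty by blast
  obtain M where M: "M = Max (set w)" by blast
  have IH: "set w = {1..M}" using snoc M by simp
  have e1: "set (w @ [x]) = insert x {1..M}" using IH by simp
  have e2: "Max (set (w@[x])) = max M x" using ne M by (simp add: max.commute)
  have x1: "1 \<le> x" "x \<le> M + 1" using snoc M by auto
  have e3: "insert x {1..M} = {1..max M x}" using x1 by auto
  show ?case using e1 e2 e3 by simp
qed

lemma rgw_hd: "is_rgw n w \<Longrightarrow> n \<ge> 1 \<Longrightarrow> \<exists>w'. w = 1 # w'"
  by (induction rule: rgw_induct) auto

lemma rgw_pos: "is_rgw n w \<Longrightarrow> x \<in> set w \<Longrightarrow> 1 \<le> x"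
  by (auto simp: is_rgw_def)


lemma snoc2: "subseq [a,b] (w@[z]) \<longleftrightarrow> subseq [a,b] w \<or> (b = z \<and> a \<in> set w)"
  by (subst subseq_snoc_iff) (auto simp: subseq_singleton_left)
lemma snoc3: "subseq [a,b,c] (w@[z]) \<longleftrightarrow> subseq [a,b,c] w \<or> (c = z \<and> subseq [a,b] w)"
  by (subst subseq_snoc_iff) auto
lemma snoc4: "subseq [a,b,c,d] (w@[z]) \<longleftrightarrow> subseq [a,b,c,d] w \<or> (d = z \<and> subseq [a,b,c] w)"
  by (subst subseq_snoc_iff) auto

lemma Max_ge: "finite A \<Longrightarrow> y \<in> A \<Longrightarrow> y \<le> Max A" by simp

lemma rgw_new: "is_rgw n w \<Longrightarrow> n \<ge> 1 \<Longrightarrow> 1 \<le> x \<Longrightarrow> x \<le> Max (set w) + 1 \<Longrightarrow> x \<notin> set w \<Longrightarrow> x = Max (set w) + 1"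
  using rgw_interval by fastforce

lemma R3: "is_rgw n w \<Longrightarrow> n \<ge> 1 \<Longrightarrow> \<forall>x y. x < y \<and> x \<in> set w \<and> y \<in> set w \<longrightarrow> subseq [x,y] w"
proof (induction rule: rgw_induct)
  case one then show ?case by simp
next
  case (snoc w z n)
  show ?case
  proof (intro allI impI)
    fix x y assume H: "x < y \<and> x \<in> set (w @ [z]) \<and> y \<in> set (w @ [z])"
    show "subseq [x,y] (w@[z])"
    proof (cases "y \<in> set w")
      case True
      have "x \<in> set w"
      proof (rule ccontr)
        assume "x \<notin> set w"
        then have "x = z" using H by auto
        then have "x = Max (set w) + 1" using rgw_new snoc \<open>x \<notin> set w\<close> by blast
        moreover have "y \<le> Max (set w)" using True by simp
        ultimately show False using H by simp
      qed
      then show ?thesis using snoc.IH H True by (simp add: snoc2)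
    next
      case False
      then have "y = z" "x \<in> set w" using H by auto
      then show ?thesis by (simp add: snoc2)
    qed
  qed
qed

lemma R3': "is_rgw n w \<Longrightarrow> n \<ge> 1 \<Longrightarrow> \<forall>x y. 1 < x \<and> x < y \<and> x \<in> set w \<and> y \<in> set w \<longrightarrow> subseq [1,x,y] w"
proof (induction rule: rgw_induct)
  case one then show ?case by simp
next
  case (snoc w z n)
  have one: "1 \<in> set w" using rgw_hd snoc by fastforce
  show ?case
  proof (intro allI impI)
    fix x y assume H: "1 < x \<and> x < y \<and> x \<in> set (w @ [z]) \<and> y \<in> set (w @ [z])"
    show "subseq [1,x,y] (w@[z])"
    proof (cases "y \<in> set w")
      case True
      have "x \<in> set w"
      proof (rule ccontr)
        assume "x \<notin> set w"
        then have "x = z" using H by auto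
        then have "x = Max (set w) + 1" using rgw_new snoc \<open>x \<notin> set w\<close> by blast
        moreover have "y \<le> Max (set w)" using True by simp
        ultimately show False using H by simp
      qed
      then show ?thesis using snoc.IH H True by (simp add: snoc3)
    next
      case False
      then have "y = z" "x \<in> set w" using H by auto
      then show ?thesis using R3[OF snoc(1,2)] one H by (simp add: snoc3)
    qed
  qed
qed

lemma R4: "is_rgw n w \<Longrightarrow> n \<ge> 1 \<Longrightarrow> \<forall>x b. x < b \<and> x \<in> set w \<and> subseq [b,b] w \<longrightarrow> subseq [x,b,b] w"
proof (induction rule: rgw_induct)
  case one then show ?case by simp
next
  case (snoc w z n)
  show ?case
  proof (intro allI impI)
    fix x b assume H: "x < b \<and> x \<in> set (w @ [z]) \<and> subseq [b,b] (w @ [z])"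
    have bw: "b \<in> set w" using H by (auto simp: snoc2 dest: list_emb_set)
    have xw: "x \<in> set w"
    proof (rule ccontr)
      assume "x \<notin> set w"
      then have "x = z" using H by auto
      then have "x = Max (set w) + 1" using rgw_new snoc \<open>x \<notin> set w\<close> by blast
      moreover have "b \<le> Max (set w)" using bw by simp
      ultimately show False using H by simp
    qed
    from H have "subseq [b,b] w \<or> (b = z \<and> b \<in> set w)" by (simp add: snoc2)
    then show "subseq [x,b,b] (w@[z])"
    proof
      assume "subseq [b,b] w"
      then show ?thesis using snoc.IH H xw by (simp add: snoc3)
    next
      assume "b = z \<and> b \<in> set w"
      then have "subseq [x,b] w" using R3[OF snoc(1,2)] H xw by blast
      then show ?thesis using \<open>b = z \<and> b \<in> set w\<close> by (simp add: snoc3)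
    qed
  qed
qed

definition av1221 where "av1221 w \<longleftrightarrow> \<not>(\<exists>a b::nat. a < b \<and> subseq [a,b,b,a] w)"
definition av1223 where "av1223 w \<longleftrightarrow> \<not>(\<exists>a b c::nat. a < b \<and> b < c \<and> subseq [a,b,b,c] w)"
definition av1232 where "av1232 w \<longleftrightarrow> \<not>(\<exists>a b c::nat. a < b \<and> b < c \<and> subseq [a,b,c,b] w)"

lemma U: "is_rgw n w \<Longrightarrow> n \<ge> 1 \<Longrightarrow> av1221 w \<longrightarrow> av1223 w \<longrightarrow>
   (\<forall>b' b. 1 < b' \<and> b' < b \<and> subseq [b',b'] w \<and> subseq [b,b] w \<longrightarrow> False)"
proof (induction rule: rgw_induct)
  case one then show ?case by simp
next
  case (snoc w z n)
  have one: "1 \<in> set w" using rgw_hd snoc by fastforce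
  show ?case
  proof (intro impI allI)
    fix b' b
    assume A1: "av1221 (w@[z])" and A2: "av1223 (w@[z])"
      and H: "1 < b' \<and> b' < b \<and> subseq [b', b'] (w @ [z]) \<and> subseq [b, b] (w @ [z])"
    have a1: "av1221 w" using A1 by (auto simp: av1221_def snoc4)
    have a2: "av1223 w" using A2 by (auto simp: av1223_def snoc4)
    from H have h1: "subseq [b',b'] w \<or> (b' = z \<and> b' \<in> set w)"
      and h2: "subseq [b,b] w \<or> (b = z \<and> b \<in> set w)" by (auto simp: snoc2)
    show False
    proof (cases "subseq [b',b'] w")
      case T1: True
      show False
      proof (cases "subseq [b,b] w")
        case True then show False using snoc.IH a1 a2 H T1 by blast
      next
        case False
        then have "b = z" using h2 by blast
        have "subseq [1,b',b'] w" using R4[OF snoc(1,2)] T1 one H by blast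
        then have "subseq [1,b',b',b] (w@[z])" using \<open>b = z\<close> by (simp add: snoc4)
        then show False using A2 H unfolding av1223_def by auto
      qed
    next
      case False
      then have z: "b' = z" "b' \<in> set w" using h1 by auto
      then have "b \<noteq> z" using H by simp
      then have "subseq [b,b] w" using h2 by blast
      then have "subseq [b',b,b] w" using R4[OF snoc(1,2)] z H by blast
      then have "subseq [b',b,b,b'] (w@[z])" using z by (simp add: snoc4)
      then show False using A1 H unfolding av1221_def by auto
    qed
  qed
qed


lemma subseq_set: "subseq xs w \<Longrightarrow> y \<in> set xs \<Longrightarrow> y \<in> set w"
  by (erule list_emb_set) auto

definition rep :: "nat list \<Rightarrow> bool" where "rep w \<longleftrightarrow> (\<exists>b>1. subseq [b,b] w)"
definition mx :: "nat list \<Rightarrow> nat" where "mx w = Max (set w)"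
definition FA where "FA w = insert (mx w) (insert (mx w + 1) (if rep w then {} else {1}))"
definition FB where "FB w = (if rep w then {b. 1 < b \<and> subseq [b,b] w} else {1..mx w + 1})"

lemma mx_ge: "x \<in> set w \<Longrightarrow> x \<le> mx w" by (simp add: mx_def)
lemma mx_in: "is_rgw n w \<Longrightarrow> n \<ge> 1 \<Longrightarrow> mx w \<in> set w"
  using rgw_nonempty mx_def by auto
lemma in_set_rgw: "is_rgw n w \<Longrightarrow> n \<ge> 1 \<Longrightarrow> 1 \<le> x \<Longrightarrow> x \<le> mx w \<Longrightarrow> x \<in> set w"
  using rgw_interval mx_def by fastforce
lemma one_in: "is_rgw n w \<Longrightarrow> n \<ge> 1 \<Longrightarrow> 1 \<in> set w"
  using rgw_hd by fastforce

lemma KA: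
  assumes w: "is_rgw n w" "n \<ge> 1" and x: "1 \<le> x" "x \<le> mx w + 1"
  shows "(\<not>(\<exists>b. x < b \<and> subseq [x,b,b] w) \<and> \<not>(\<exists>a c. a < x \<and> x < c \<and> subseq [a,x,c] w))
         \<longleftrightarrow> x \<in> FA w"
proof
  assume H: "\<not>(\<exists>b. x < b \<and> subseq [x,b,b] w) \<and> \<not>(\<exists>a c. a < x \<and> x < c \<and> subseq [a,x,c] w)"
  show "x \<in> FA w"
  proof (rule ccontr)
    assume nx: "x \<notin> FA w"
    then have xm: "x < mx w" using x by (auto simp: FA_def)
    have xin: "x \<in> set w" using in_set_rgw[OF w x(1)] xm by simp
    show False
    proof (cases "x = 1")
      case True
      then have "rep w" using nx by (auto simp: FA_def split: if_splits)
      then obtain b where "b > 1" "subseq [b,b] w" by (auto simp: rep_def)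
      then have "subseq [x,b,b] w" using R4[OF w, rule_format, of x b] True xin by simp
      then show False using H \<open>b > 1\<close> True by blast
    next
      case False
      then have x1: "1 < x" using x by simp
      have "subseq [1,x,mx w] w" using R3'[OF w, rule_format, of x "mx w"] x1 xm xin mx_in[OF w] by simp
      then show False using H x1 xm by blast
    qed
  qed
next
  assume "x \<in> FA w"
  then consider "x = mx w" | "x = mx w + 1" | "x = 1" "\<not> rep w"
    by (auto simp: FA_def split: if_splits)
  then show "\<not>(\<exists>b. x < b \<and> subseq [x,b,b] w) \<and> \<not>(\<exists>a c. a < x \<and> x < c \<and> subseq [a,x,c] w)"
  proof cases
    case 1
    show ?thesis
    proof safe
      fix b assume "x < b" "subseq [x,b,b] w"
      then have "b \<in> set w" using subseq_set[of "[x,b,b]" w b] by simp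
      then show False using mx_ge[of b w] 1 \<open>x < b\<close> by simp
    next
      fix a c assume "a < x" "x < c" "subseq [a,x,c] w"
      then have "c \<in> set w" using subseq_set[of "[a,x,c]" w c] by simp
      then show False using mx_ge[of c w] 1 \<open>x < c\<close> by simp
    qed
  next
    case 2
    then have nx: "x \<notin> set w" using mx_ge by fastforce
    show ?thesis
    proof safe
      fix b assume "x < b" "subseq [x,b,b] w"
      then have "x \<in> set w" using subseq_set[of "[x,b,b]" w x] by simp
      then show False using nx by simp
    next
      fix a c assume "a < x" "x < c" "subseq [a,x,c] w"
      then have "x \<in> set w" using subseq_set[of "[a,x,c]" w x] by simp
      then show False using nx by simp
    qed
  next
    case 3
    show ?thesis
    proof safe
      fix b assume "x < b" "subseq [x,b,b] w"
      then have "subseq [b,b] w" by (metis subseq_Cons')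
      then show False using 3 \<open>x < b\<close> by (auto simp: rep_def)
    next
      fix a c assume "a < x" "x < c" "subseq [a,x,c] w"
      then have "a \<in> set w" using subseq_set[of "[a,x,c]" w a] by simp
      then have "1 \<le> a" using rgw_pos w by blast
      then show False using 3 \<open>a < x\<close> by simp
    qed
  qed
qed

lemma repD: "rep w \<Longrightarrow> \<exists>b>1. subseq [b,b] w" by (simp add: rep_def)

lemma Uu:
  assumes w: "is_rgw n w" "n \<ge> 1" and av: "av1221 w" "av1223 w" and b: "1 < b" "subseq [b,b] w"
  shows "\<And>b'. 1 < b' \<Longrightarrow> subseq [b',b'] w \<Longrightarrow> b' = b"
proof -
  fix b' assume b': "1 < b'" "subseq [b',b'] w"
  have H: "\<forall>b' b. 1 < b' \<and> b' < b \<and> subseq [b',b'] w \<and> subseq [b,b] w \<longrightarrow> False"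
    using mp[OF mp[OF U[OF w] av(1)] av(2)] .
  have n1: "\<not> b' < b" using H[rule_format, of b' b] b b' by blast
  have n2: "\<not> b < b'" using H[rule_format, of b b'] b b' by blast
  show "b' = b" using n1 n2 by simp
qed

lemma FB_rep:
  assumes w: "is_rgw n w" "n \<ge> 1" and av: "av1221 w" "av1223 w" and b: "1 < b" "subseq [b,b] w"
  shows "FB w = {b}"
proof -
  have R: "rep w" unfolding rep_def using b by blast
  have U1: "\<And>b'. 1 < b' \<Longrightarrow> subseq [b',b'] w \<Longrightarrow> b' = b" using Uu[OF w av b] .
  have "FB w = {b'. 1 < b' \<and> subseq [b',b'] w}" using R by (simp add: FB_def)
  also have "\<dots> = {b}"
  proof (intro equalityI subsetI)
    fix y assume "y \<in> {b'. 1 < b' \<and> subseq [b',b'] w}"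
    then show "y \<in> {b}" using U1[of y] by simp
  next
    fix y assume "y \<in> {b}"
    then show "y \<in> {b'. 1 < b' \<and> subseq [b',b'] w}" using b by simp
  qed
  finally show ?thesis .
qed

lemma KB:
  assumes w: "is_rgw n w" "n \<ge> 1" and av: "av1221 w" "av1223 w" and x: "1 \<le> x" "x \<le> mx w + 1"
  shows "(\<not>(\<exists>b. x < b \<and> subseq [x,b,b] w) \<and> \<not>(\<exists>a b. a < b \<and> b < x \<and> subseq [a,b,b] w))
         \<longleftrightarrow> x \<in> FB w"
proof (cases "rep w")
  case False
  have nr: "\<And>b. 1 < b \<Longrightarrow> \<not> subseq [b,b] w" using False unfolding rep_def by blast
  have "\<not>(\<exists>b. x < b \<and> subseq [x,b,b] w)"
  proof
    assume "\<exists>b. x < b \<and> subseq [x,b,b] w"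
    then obtain b where "x < b" "subseq [x,b,b] w" by blast
    then have "subseq [b,b] w" using subseq_Cons'[of x "[b,b]" w] by blast
    moreover have "1 < b" using \<open>x < b\<close> x by simp
    ultimately show False using nr by blast
  qed
  moreover have "\<not>(\<exists>a b. a < b \<and> b < x \<and> subseq [a,b,b] w)"
  proof
    assume "\<exists>a b. a < b \<and> b < x \<and> subseq [a,b,b] w"
    then obtain a b where ab: "a < b" "subseq [a,b,b] w" by blast
    then have "a \<in> set w" using subseq_set[of "[a,b,b]" w a] by simp
    then have "1 \<le> a" using rgw_pos w by blast
    have "subseq [b,b] w" using ab(2) subseq_Cons'[of a "[b,b]" w] by blast
    moreover have "1 < b" using ab \<open>1 \<le> a\<close> by simp
    ultimately show False using nr by blast
  qed
  moreover have "FB w = {1..mx w + 1}" using False by (simp add: FB_def)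
  ultimately show ?thesis using x by simp
next
  case True
  then obtain b where b: "1 < b" "subseq [b,b] w" unfolding rep_def by blast
  have FB: "FB w = {b}" using FB_rep[OF w av b] .
  have U': "\<And>b'. 1 < b' \<Longrightarrow> subseq [b',b'] w \<Longrightarrow> b' = b"
    using Uu[OF w av b] .
  have bin: "b \<in> set w" using subseq_set[of "[b,b]" w b] b by simp
  show ?thesis
  proof
    assume H: "\<not>(\<exists>b. x < b \<and> subseq [x,b,b] w) \<and> \<not>(\<exists>a b. a < b \<and> b < x \<and> subseq [a,b,b] w)"
    show "x \<in> FB w"
    proof (rule ccontr)
      assume "x \<notin> FB w"
      then have "x \<noteq> b" using FB by simp
      then consider "b < x" | "x < b" by linarith
      then show False
      proof cases
        case 1
        have "subseq [1,b,b] w" using R4[OF w, rule_format, of 1 b] b one_in[OF w] by simp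
        moreover have "(1::nat) < b" using b by simp
        ultimately show False using H 1 by blast
      next
        case 2
        have "x \<le> mx w" using 2 mx_ge[OF bin] by simp
        then have "x \<in> set w" using in_set_rgw[OF w x(1)] by simp
        then have "subseq [x,b,b] w" using R4[OF w, rule_format, of x b] b 2 by simp
        then show False using H 2 by blast
      qed
    qed
  next
    assume "x \<in> FB w"
    then have xb: "x = b" using FB by simp
    show "\<not>(\<exists>b. x < b \<and> subseq [x,b,b] w) \<and> \<not>(\<exists>a b. a < b \<and> b < x \<and> subseq [a,b,b] w)"
    proof safe
      fix c assume c: "x < c" "subseq [x,c,c] w"
      then have "subseq [c,c] w" using subseq_Cons'[of x "[c,c]" w] by blast
      moreover have "1 < c" using c(1) xb b by simp
      ultimately have "c = b" using U' by blast
      then show False using c(1) xb by simp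
    next
      fix a c assume ac: "a < c" "c < x" "subseq [a,c,c] w"
      then have "a \<in> set w" using subseq_set[of "[a,c,c]" w a] by simp
      then have "1 \<le> a" using rgw_pos w by blast
      have "subseq [c,c] w" using ac(3) subseq_Cons'[of a "[c,c]" w] by blast
      moreover have "1 < c" using ac \<open>1 \<le> a\<close> by simp
      ultimately have "c = b" using U' by blast
      then show False using ac xb by simp
    qed
  qed
qed


lemma av1221_snoc: "av1221 (w@[x]) \<longleftrightarrow> av1221 w \<and> \<not>(\<exists>b. x < b \<and> subseq [x,b,b] w)"
  by (auto simp: av1221_def snoc4)
lemma av1232_snoc: "av1232 (w@[x]) \<longleftrightarrow> av1232 w \<and> \<not>(\<exists>a c. a < x \<and> x < c \<and> subseq [a,x,c] w)"
  by (auto simp: av1232_def snoc4)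
lemma av1223_snoc: "av1223 (w@[x]) \<longleftrightarrow> av1223 w \<and> \<not>(\<exists>a b. a < b \<and> b < x \<and> subseq [a,b,b] w)"
  by (auto simp: av1223_def snoc4)

definition XA where "XA n = {w. is_rgw n w \<and> av1221 w \<and> av1232 w}"
definition XB where "XB n = {w. is_rgw n w \<and> av1221 w \<and> av1223 w}"

lemma mx_pos: "is_rgw n w \<Longrightarrow> n \<ge> 1 \<Longrightarrow> 1 \<le> mx w"
  using mx_in rgw_pos by blast

lemma FA_sub: "is_rgw n w \<Longrightarrow> n \<ge> 1 \<Longrightarrow> x \<in> FA w \<Longrightarrow> 1 \<le> x \<and> x \<le> mx w + 1"
  using mx_pos[of n w] by (auto simp: FA_def split: if_splits)
lemma FB_sub: "is_rgw n w \<Longrightarrow> n \<ge> 1 \<Longrightarrow> x \<in> FB w \<Longrightarrow> 1 \<le> x \<and> x \<le> mx w + 1"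
  using mx_pos[of n w] by (auto simp: FB_def split: if_splits dest!: subseq_set[where y=x] mx_ge)

lemma snoc_decomp: "length v = Suc n \<Longrightarrow> \<exists>w x. v = w @ [x] \<and> length w = n"
  by (metis length_Suc_conv_rev)

lemma XA_step:
  assumes n: "n \<ge> 1"
  shows "XA (Suc n) = (\<Union>w\<in>XA n. (\<lambda>x. w@[x]) ` FA w)"
proof (intro equalityI subsetI)
  fix v assume "v \<in> XA (Suc n)"
  then have v: "is_rgw (Suc n) v" "av1221 v" "av1232 v" by (auto simp: XA_def)
  obtain w x where wx: "v = w @ [x]" "length w = n" using snoc_decomp rgw_len[OF v(1)] by blast
  have r: "is_rgw n w" "1 \<le> x" "x \<le> mx w + 1" using v(1) rgw_snoc[OF wx(2)] n wx(1) by (auto simp: mx_def)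
  have a: "av1221 w" "av1232 w" "\<not>(\<exists>b. x < b \<and> subseq [x,b,b] w)" "\<not>(\<exists>a c. a < x \<and> x < c \<and> subseq [a,x,c] w)"
    using v(2,3) wx(1) by (auto simp: av1221_snoc av1232_snoc)
  have "x \<in> FA w" using KA[OF r(1) n r(2,3)] a by blast
  then show "v \<in> (\<Union>w\<in>XA n. (\<lambda>x. w@[x]) ` FA w)" using wx r a by (auto simp: XA_def)
next
  fix v assume "v \<in> (\<Union>w\<in>XA n. (\<lambda>x. w@[x]) ` FA w)"
  then obtain w x where wx: "v = w@[x]" "w \<in> XA n" "x \<in> FA w" by blast
  have w: "is_rgw n w" "av1221 w" "av1232 w" using wx by (auto simp: XA_def)
  have x: "1 \<le> x" "x \<le> mx w + 1" using FA_sub[OF w(1) n wx(3)] by auto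
  have e: "\<not>(\<exists>b. x < b \<and> subseq [x,b,b] w) \<and> \<not>(\<exists>a c. a < x \<and> x < c \<and> subseq [a,x,c] w)"
    using KA[OF w(1) n x] wx(3) by blast
  have "is_rgw (Suc n) v" using rgw_snoc[OF rgw_len[OF w(1)], of x] w x n wx(1) by (auto simp: mx_def)
  then show "v \<in> XA (Suc n)" using e w wx(1) by (auto simp: XA_def av1221_snoc av1232_snoc)
qed

lemma XB_step:
  assumes n: "n \<ge> 1"
  shows "XB (Suc n) = (\<Union>w\<in>XB n. (\<lambda>x. w@[x]) ` FB w)"
proof (intro equalityI subsetI)
  fix v assume "v \<in> XB (Suc n)"
  then have v: "is_rgw (Suc n) v" "av1221 v" "av1223 v" by (auto simp: XB_def)
  obtain w x where wx: "v = w @ [x]" "length w = n" using snoc_decomp rgw_len[OF v(1)] by blast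
  have r: "is_rgw n w" "1 \<le> x" "x \<le> mx w + 1" using v(1) rgw_snoc[OF wx(2)] n wx(1) by (auto simp: mx_def)
  have a: "av1221 w" "av1223 w" "\<not>(\<exists>b. x < b \<and> subseq [x,b,b] w)" "\<not>(\<exists>a b. a < b \<and> b < x \<and> subseq [a,b,b] w)"
    using v(2,3) wx(1) by (auto simp: av1221_snoc av1223_snoc)
  have "x \<in> FB w" using KB[OF r(1) n a(1,2) r(2,3)] a by blast
  then show "v \<in> (\<Union>w\<in>XB n. (\<lambda>x. w@[x]) ` FB w)" using wx r a by (auto simp: XB_def)
next
  fix v assume "v \<in> (\<Union>w\<in>XB n. (\<lambda>x. w@[x]) ` FB w)"
  then obtain w x where wx: "v = w@[x]" "w \<in> XB n" "x \<in> FB w" by blast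
  have w: "is_rgw n w" "av1221 w" "av1223 w" using wx by (auto simp: XB_def)
  have x: "1 \<le> x" "x \<le> mx w + 1" using FB_sub[OF w(1) n wx(3)] by auto
  have e: "\<not>(\<exists>b. x < b \<and> subseq [x,b,b] w) \<and> \<not>(\<exists>a b. a < b \<and> b < x \<and> subseq [a,b,b] w)"
    using KB[OF w(1) n w(2,3) x] wx(3) by blast
  have "is_rgw (Suc n) v" using rgw_snoc[OF rgw_len[OF w(1)], of x] w x n wx(1) by (auto simp: mx_def)
  then show "v \<in> XB (Suc n)" using e w wx(1) by (auto simp: XB_def av1221_snoc av1223_snoc)
qed

lemma av_one: "av1221 [1]" "av1232 [1]" "av1223 [1]"
  by (auto simp: av1221_def av1232_def av1223_def dest: list_emb_length)
lemma XA_one: "XA 1 = {[1]}"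
  unfolding XA_def rgw_one using av_one by auto
lemma XB_one: "XB 1 = {[1]}"
  unfolding XB_def rgw_one using av_one by auto

lemma sum_step:
  assumes "finite X" "\<And>w. w \<in> X \<Longrightarrow> finite (F w)"
  shows "finite (\<Union>w\<in>X. (\<lambda>x. w@[x]) ` F w)"
    "sum h (\<Union>w\<in>X. (\<lambda>x. w@[x]) ` F w) = (\<Sum>w\<in>X. \<Sum>x\<in>F w. h (w@[x]))"
proof -
  show "finite (\<Union>w\<in>X. (\<lambda>x. w@[x]) ` F w)" using assms by auto
  have "sum h (\<Union>w\<in>X. (\<lambda>x. w@[x]) ` F w) = (\<Sum>w\<in>X. sum h ((\<lambda>x. w@[x]) ` F w))"
    by (rule sum.UNION_disjoint) (use assms in auto)
  also have "\<dots> = (\<Sum>w\<in>X. \<Sum>x\<in>F w. h (w@[x]))"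
    by (rule sum.cong[OF refl], subst sum.reindex) (auto simp: inj_on_def)
  finally show "sum h (\<Union>w\<in>X. (\<lambda>x. w@[x]) ` F w) = (\<Sum>w\<in>X. \<Sum>x\<in>F w. h (w@[x]))" .
qed

lemma FA_fin: "finite (FA w)" by (simp add: FA_def)
lemma FB_fin: "is_rgw n w \<Longrightarrow> n \<ge> 1 \<Longrightarrow> finite (FB w)"
  by (rule finite_subset[of _ "{1..mx w + 1}"]) (use FB_sub in auto)

lemma XA_fin: "n \<ge> 1 \<Longrightarrow> finite (XA n)"
proof (induction n rule: dec_induct)
  case base
  have "finite (XA 1)" unfolding XA_one by simp
  then show ?case by simp
next
  case (step n) then show ?case using XA_step[of n] sum_step(1)[of "XA n" FA] FA_fin by simp
qed
lemma XB_fin: "n \<ge> 1 \<Longrightarrow> finite (XB n)"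
proof (induction n rule: dec_induct)
  case base
  have "finite (XB 1)" unfolding XB_one by simp
  then show ?case by simp
next
  case (step k)
  have "\<And>w. w \<in> XB k \<Longrightarrow> finite (FB w)" using FB_fin step(1) by (auto simp: XB_def)
  then show ?case using XB_step[OF step(1)] sum_step(1)[of "XB k" FB] step.IH by simp
qed


definition st :: "nat list \<Rightarrow> nat" where
  "st w = (if rep w then 2 else if mx w = 1 then 0 else 1)"
definition ind :: "nat \<Rightarrow> nat list \<Rightarrow> nat" where
  "ind k w = (if st w = k then 1 else 0)"

lemma rep_snoc: "rep (w@[x]) \<longleftrightarrow> rep w \<or> (1 < x \<and> x \<in> set w)"
  by (auto simp: rep_def snoc2)
lemma mx_snoc: "w \<noteq> [] \<Longrightarrow> mx (w@[x]) = max (mx w) x"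
  by (simp add: mx_def max.commute)

lemma stA:
  assumes w: "is_rgw n w" "n \<ge> 1"
  shows "(\<Sum>x\<in>FA w. ind 0 (w@[x])) = ind 0 w \<and>
         (\<Sum>x\<in>FA w. ind 1 (w@[x])) = ind 0 w + 2 * ind 1 w \<and>
         (\<Sum>x\<in>FA w. ind 2 (w@[x])) = ind 1 w + 2 * ind 2 w"
proof -
  have ne: "w \<noteq> []" using rgw_nonempty w by blast
  have mi: "mx w \<in> set w" using mx_in w by blast
  have m1: "1 \<le> mx w" using mx_pos w by blast
  have nm: "mx w + 1 \<notin> set w" using mx_ge by fastforce
  consider "rep w" | "\<not> rep w" "mx w = 1" | "\<not> rep w" "mx w \<noteq> 1" by blast
  then show ?thesis
  proof cases
    case 1
    then have "FA w = {mx w, mx w + 1}" by (simp add: FA_def)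
    then show ?thesis using 1 by (simp add: ind_def st_def rep_snoc)
  next
    case 2
    then have "FA w = {1, 2}" by (auto simp: FA_def)
    moreover have "2 \<notin> set w" using 2 mx_ge[of 2 w] by auto
    ultimately show ?thesis using 2 ne by (simp add: ind_def st_def rep_snoc mx_snoc)
  next
    case 3
    then have "FA w = {mx w, mx w + 1, 1}" by (auto simp: FA_def)
    moreover have "mx w \<noteq> 1" "1 < mx w" using 3 m1 by auto
    ultimately show ?thesis using 3 ne mi nm by (simp add: ind_def st_def rep_snoc mx_snoc)
  qed
qed

lemma split_int: "2 \<le> (m::nat) \<Longrightarrow> (\<Sum>x\<in>{1..m+1}. g x) = g 1 + g (m+1) + (\<Sum>x\<in>{2..m}. g x)"
proof -
  assume m: "2 \<le> m"
  have "{1..m+1} = insert 1 (insert (m+1) {2..m})" using m by auto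
  then show ?thesis using m by (simp add: add.assoc)
qed

lemma stB:
  assumes w: "is_rgw n w" "n \<ge> 1" and av: "av1221 w" "av1223 w"
  shows "(\<Sum>x\<in>FB w. ind 0 (w@[x])) = ind 0 w \<and>
         (\<Sum>x\<in>FB w. ind 1 (w@[x])) = ind 0 w + 2 * ind 1 w \<and>
         (\<Sum>x\<in>FB w. ind 2 (w@[x])) = ind 2 w + ind 1 w * (mx w - 1) \<and>
         (\<Sum>x\<in>FB w. ind 1 (w@[x]) * (mx (w@[x]) - 1)) = ind 0 w + 2 * (ind 1 w * (mx w - 1)) + ind 1 w"
proof -
  have ne: "w \<noteq> []" using rgw_nonempty w by blast
  have mi: "mx w \<in> set w" using mx_in w by blast
  have m1: "1 \<le> mx w" using mx_pos w by blast
  have nm: "mx w + 1 \<notin> set w" using mx_ge by fastforce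
  consider "rep w" | "\<not> rep w" "mx w = 1" | "\<not> rep w" "mx w \<noteq> 1" by blast
  then show ?thesis
  proof cases
    case 1
    then obtain b where b: "1 < b" "subseq [b,b] w" by (auto simp: rep_def)
    have "FB w = {b}" using FB_rep[OF w av b] .
    moreover have "b \<in> set w" using b subseq_set by fastforce
    ultimately show ?thesis using 1 b by (simp add: ind_def st_def rep_snoc)
  next
    case 2
    then have "FB w = {1, 2}" by (auto simp: FB_def)
    moreover have "2 \<notin> set w" using 2 mx_ge[of 2 w] by auto
    ultimately show ?thesis using 2 ne by (simp add: ind_def st_def rep_snoc mx_snoc)
  next
    case 3
    define m where "m = mx w"
    have m2: "2 \<le> m" using 3 m1 m_def by auto
    have FB: "FB w = {1..m+1}" using 3 m_def by (simp add: FB_def)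
    have mid: "\<And>x. x \<in> {2..m} \<Longrightarrow> st (w@[x]) = 2"
      using in_set_rgw[OF w] m_def by (auto simp: st_def rep_snoc)
    have e1: "st (w@[1]) = 1" "mx (w@[1]) = m" using 3 ne m2 m_def by (auto simp: st_def rep_snoc mx_snoc)
    have e2: "st (w@[m+1]) = 1" "mx (w@[m+1]) = m + 1" using 3 ne m2 m_def nm by (auto simp: st_def rep_snoc mx_snoc)
    have s0: "(\<Sum>x\<in>{2..m}. ind 0 (w@[x])) = 0" "(\<Sum>x\<in>{2..m}. ind 1 (w@[x])) = 0"
      "(\<Sum>x\<in>{2..m}. ind 1 (w@[x]) * (mx (w@[x]) - 1)) = 0"
      using mid by (auto simp: ind_def)
    have s2: "(\<Sum>x\<in>{2..m}. ind 2 (w@[x])) = m - 1"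
      using mid by (simp add: ind_def)
    have stw: "st w = 1" using 3 by (simp add: st_def)
    show ?thesis unfolding FB split_int[OF m2] s0 s2 using e1 e2 stw m2 m_def
      by (simp add: ind_def)
  qed
qed


definition cA where "cA k n = (\<Sum>w\<in>XA n. ind k w)"
definition cB where "cB k n = (\<Sum>w\<in>XB n. ind k w)"
definition WB where "WB n = (\<Sum>w\<in>XB n. ind 1 w * (mx w - 1))"

lemma ind_sum: "ind 0 w + ind 1 w + ind 2 w = 1"
  by (simp add: ind_def st_def)

lemma card_X: "card X = (\<Sum>w\<in>X. ind 0 w) + (\<Sum>w\<in>X. ind 1 w) + (\<Sum>w\<in>X. ind 2 w)"
proof -
  have "card X = (\<Sum>w\<in>X. 1)" by (rule card_eq_sum)
  also have "\<dots> = (\<Sum>w\<in>X. ind 0 w + ind 1 w + ind 2 w)" by (rule sum.cong[OF refl], rule ind_sum[symmetric])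
  also have "\<dots> = (\<Sum>w\<in>X. ind 0 w) + (\<Sum>w\<in>X. ind 1 w) + (\<Sum>w\<in>X. ind 2 w)"
    by (simp only: sum.distrib)
  finally show ?thesis .
qed
lemma card_XA: "card (XA n) = cA 0 n + cA 1 n + cA 2 n"
  unfolding cA_def by (rule card_X)
lemma card_XB: "card (XB n) = cB 0 n + cB 1 n + cB 2 n"
  unfolding cB_def by (rule card_X)

lemma stepA: assumes n: "n \<ge> 1"
  shows "(\<Sum>w\<in>XA (Suc n). h w) = (\<Sum>w\<in>XA n. \<Sum>x\<in>FA w. h (w@[x]))"
proof -
  have fin: "finite (XA n)" "\<And>w. w \<in> XA n \<Longrightarrow> finite (FA w)" using XA_fin[OF n] FA_fin by auto
  show ?thesis unfolding XA_step[OF n] by (rule sum_step(2)[OF fin])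
qed
lemma stepB: assumes n: "n \<ge> 1"
  shows "(\<Sum>w\<in>XB (Suc n). h w) = (\<Sum>w\<in>XB n. \<Sum>x\<in>FB w. h (w@[x]))"
proof -
  have fin: "finite (XB n)" "\<And>w. w \<in> XB n \<Longrightarrow> finite (FB w)" using XB_fin[OF n] FB_fin n
    by (auto simp: XB_def)
  show ?thesis unfolding XB_step[OF n] by (rule sum_step(2)[OF fin])
qed

lemma recA:
  assumes n: "n \<ge> 1"
  shows "cA 0 (Suc n) = cA 0 n" "cA 1 (Suc n) = cA 0 n + 2 * cA 1 n" "cA 2 (Suc n) = cA 1 n + 2 * cA 2 n"
proof -
  have S: "\<And>w. w \<in> XA n \<Longrightarrow> (\<Sum>x\<in>FA w. ind 0 (w@[x])) = ind 0 w \<and>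
         (\<Sum>x\<in>FA w. ind 1 (w@[x])) = ind 0 w + 2 * ind 1 w \<and>
         (\<Sum>x\<in>FA w. ind 2 (w@[x])) = ind 1 w + 2 * ind 2 w"
    using stA n unfolding XA_def by blast
  have "cA 0 (Suc n) = (\<Sum>w\<in>XA n. \<Sum>x\<in>FA w. ind 0 (w@[x]))" unfolding cA_def by (rule stepA[OF n])
  also have "\<dots> = (\<Sum>w\<in>XA n. ind 0 w)" by (rule sum.cong[OF refl]) (use S in blast)
  finally show "cA 0 (Suc n) = cA 0 n" unfolding cA_def .
  have "cA 1 (Suc n) = (\<Sum>w\<in>XA n. \<Sum>x\<in>FA w. ind 1 (w@[x]))" unfolding cA_def by (rule stepA[OF n])
  also have "\<dots> = (\<Sum>w\<in>XA n. ind 0 w + 2 * ind 1 w)" by (rule sum.cong[OF refl]) (use S in blast)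
  also have "\<dots> = cA 0 n + 2 * cA 1 n" unfolding cA_def by (simp only: sum.distrib sum_distrib_left)
  finally show "cA 1 (Suc n) = cA 0 n + 2 * cA 1 n" .
  have "cA 2 (Suc n) = (\<Sum>w\<in>XA n. \<Sum>x\<in>FA w. ind 2 (w@[x]))" unfolding cA_def by (rule stepA[OF n])
  also have "\<dots> = (\<Sum>w\<in>XA n. ind 1 w + 2 * ind 2 w)" by (rule sum.cong[OF refl]) (use S in blast)
  also have "\<dots> = cA 1 n + 2 * cA 2 n" unfolding cA_def by (simp only: sum.distrib sum_distrib_left)
  finally show "cA 2 (Suc n) = cA 1 n + 2 * cA 2 n" .
qed

lemma recB:
  assumes n: "n \<ge> 1"
  shows "cB 0 (Suc n) = cB 0 n" "cB 1 (Suc n) = cB 0 n + 2 * cB 1 n" "cB 2 (Suc n) = cB 2 n + WB n"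
    "WB (Suc n) = cB 0 n + 2 * WB n + cB 1 n"
proof -
  have S: "\<And>w. w \<in> XB n \<Longrightarrow> (\<Sum>x\<in>FB w. ind 0 (w@[x])) = ind 0 w \<and>
         (\<Sum>x\<in>FB w. ind 1 (w@[x])) = ind 0 w + 2 * ind 1 w \<and>
         (\<Sum>x\<in>FB w. ind 2 (w@[x])) = ind 2 w + ind 1 w * (mx w - 1) \<and>
         (\<Sum>x\<in>FB w. ind 1 (w@[x]) * (mx (w@[x]) - 1)) = ind 0 w + 2 * (ind 1 w * (mx w - 1)) + ind 1 w"
    using stB n unfolding XB_def by blast
  have "cB 0 (Suc n) = (\<Sum>w\<in>XB n. \<Sum>x\<in>FB w. ind 0 (w@[x]))" unfolding cB_def by (rule stepB[OF n])
  also have "\<dots> = (\<Sum>w\<in>XB n. ind 0 w)" by (rule sum.cong[OF refl]) (use S in blast)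
  finally show "cB 0 (Suc n) = cB 0 n" unfolding cB_def .
  have "cB 1 (Suc n) = (\<Sum>w\<in>XB n. \<Sum>x\<in>FB w. ind 1 (w@[x]))" unfolding cB_def by (rule stepB[OF n])
  also have "\<dots> = (\<Sum>w\<in>XB n. ind 0 w + 2 * ind 1 w)" by (rule sum.cong[OF refl]) (use S in blast)
  also have "\<dots> = cB 0 n + 2 * cB 1 n" unfolding cB_def by (simp only: sum.distrib sum_distrib_left)
  finally show "cB 1 (Suc n) = cB 0 n + 2 * cB 1 n" .
  have "cB 2 (Suc n) = (\<Sum>w\<in>XB n. \<Sum>x\<in>FB w. ind 2 (w@[x]))" unfolding cB_def by (rule stepB[OF n])
  also have "\<dots> = (\<Sum>w\<in>XB n. ind 2 w + ind 1 w * (mx w - 1))" by (rule sum.cong[OF refl]) (use S in blast)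
  also have "\<dots> = cB 2 n + WB n" unfolding cB_def WB_def by (simp only: sum.distrib)
  finally show "cB 2 (Suc n) = cB 2 n + WB n" .
  have "WB (Suc n) = (\<Sum>w\<in>XB n. \<Sum>x\<in>FB w. ind 1 (w@[x]) * (mx (w@[x]) - 1))" unfolding WB_def by (rule stepB[OF n])
  also have "\<dots> = (\<Sum>w\<in>XB n. ind 0 w + 2 * (ind 1 w * (mx w - 1)) + ind 1 w)" by (rule sum.cong[OF refl]) (use S in blast)
  also have "\<dots> = cB 0 n + 2 * WB n + cB 1 n" unfolding cB_def WB_def by (simp only: sum.distrib sum_distrib_left)
  finally show "WB (Suc n) = cB 0 n + 2 * WB n + cB 1 n" .
qed

lemma st_one: "st [1] = 0"
proof -
  have "\<not> rep [1]" unfolding rep_def by (auto dest: list_emb_length)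
  moreover have "mx [1] = 1" by (simp add: mx_def)
  ultimately show ?thesis by (simp add: st_def)
qed

lemma st_one': "st [Suc 0] = 0" using st_one by simp

lemma base_vals: "cA 0 1 = 1" "cA 1 1 = 0" "cA 2 1 = 0" "cB 0 1 = 1" "cB 1 1 = 0" "cB 2 1 = 0" "WB 1 = 0"
  unfolding cA_def cB_def WB_def XA_one XB_one by (simp_all add: ind_def st_one')

lemma closedA': "cA 0 (Suc k) = 1 \<and> cA 1 (Suc k) + 1 = 2^k \<and>
   cA 0 (Suc k) + cA 1 (Suc k) + cA 2 (Suc k) = 1 + k * 2^(k-1)"
proof (induction k)
  case 0 then show ?case using base_vals by simp
next
  case (Suc k)
  have r: "cA 0 (Suc (Suc k)) = cA 0 (Suc k)" "cA 1 (Suc (Suc k)) = cA 0 (Suc k) + 2 * cA 1 (Suc k)"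
     "cA 2 (Suc (Suc k)) = cA 1 (Suc k) + 2 * cA 2 (Suc k)" using recA[of "Suc k"] by auto
  define a where "a = cA 1 (Suc k)"
  define c where "c = cA 2 (Suc k)"
  have h0: "cA 0 (Suc k) = 1" using Suc.IH by simp
  have h1: "a + 1 = 2^k" using Suc.IH a_def by simp
  have h2: "1 + a + c = 1 + k * 2^(k-1)" using Suc.IH a_def c_def h0 by simp
  have t: "cA 0 (Suc (Suc k)) + cA 1 (Suc (Suc k)) + cA 2 (Suc (Suc k)) = 2 * (1 + a + c) + a"
    using r h0 a_def c_def by simp
  have "2 * (1 + a + c) + a = 1 + Suc k * 2 ^ k"
  proof (cases k)
    case 0 then show ?thesis using h1 h2 by simp
  next
    case (Suc j)
    then have "a + 1 = 2 * 2^j" "1 + a + c = 1 + Suc j * 2^j" using h1 h2 by simp_all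
    then show ?thesis using Suc by (simp add: algebra_simps)
  qed
  then show ?case using t r h0 h1 a_def c_def by simp
qed

lemma closedB': "cB 0 (Suc k) = 1 \<and> cB 1 (Suc k) + 1 = 2^k \<and> WB (Suc k) = k * 2^(k-1) \<and>
   cB 0 (Suc k) + cB 1 (Suc k) + cB 2 (Suc k) = 1 + k * 2^(k-1)"
proof (induction k)
  case 0 then show ?case using base_vals by simp
next
  case (Suc k)
  have r: "cB 0 (Suc (Suc k)) = cB 0 (Suc k)" "cB 1 (Suc (Suc k)) = cB 0 (Suc k) + 2 * cB 1 (Suc k)"
     "cB 2 (Suc (Suc k)) = cB 2 (Suc k) + WB (Suc k)"
     "WB (Suc (Suc k)) = cB 0 (Suc k) + 2 * WB (Suc k) + cB 1 (Suc k)" using recB[of "Suc k"] by auto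
  define a where "a = cB 1 (Suc k)"
  define c where "c = cB 2 (Suc k)"
  define W where "W = WB (Suc k)"
  have h0: "cB 0 (Suc k) = 1" using Suc.IH by simp
  have h1: "a + 1 = 2^k" using Suc.IH a_def by simp
  have hw: "W = k * 2^(k-1)" using Suc.IH W_def by simp
  have h2: "1 + a + c = 1 + k * 2^(k-1)" using Suc.IH a_def c_def h0 by simp
  have t: "cB 0 (Suc (Suc k)) + cB 1 (Suc (Suc k)) + cB 2 (Suc (Suc k)) = (1 + a + c) + (a + 1) + W"
    using r h0 a_def c_def W_def by simp
  have tw: "WB (Suc (Suc k)) = (a + 1) + 2 * W" using r h0 a_def W_def by simp
  have e1: "(1 + a + c) + (a + 1) + W = 1 + Suc k * 2 ^ k \<and> (a + 1) + 2 * W = Suc k * 2 ^ k"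
  proof (cases k)
    case 0 then show ?thesis using h1 h2 hw by simp
  next
    case (Suc j)
    then have "a + 1 = 2 * 2^j" "1 + a + c = 1 + Suc j * 2^j" "W = Suc j * 2^j" using h1 h2 hw by simp_all
    then show ?thesis using Suc by (simp add: algebra_simps)
  qed
  then show ?case using t tw r h0 h1 a_def c_def W_def by simp
qed

theorem proposition4p12:
  fixes n :: nat
  assumes "n \<ge> 1"
  shows "pn n {[1,2,2,1], [1,2,3,2]} = 1 + (n - 1) * 2 ^ (n - 2) \<and>
         pn n {[1,2,2,1], [1,2,2,3]} = 1 + (n - 1) * 2 ^ (n - 2)"
proof -
  obtain k where k: "n = Suc k" using assms by (cases n) auto
  have "pn n {[1,2,2,1], [1,2,3,2]} = card (XA n)"
    unfolding pn_def XA_def av1221_def av1232_def c1221[symmetric] c1232[symmetric] by simp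
  also have "\<dots> = 1 + (n - 1) * 2 ^ (n - 2)" using card_XA[of n] closedA'[of k] k by simp
  finally have A: "pn n {[1,2,2,1], [1,2,3,2]} = 1 + (n - 1) * 2 ^ (n - 2)" .
  have "pn n {[1,2,2,1], [1,2,2,3]} = card (XB n)"
    unfolding pn_def XB_def av1221_def av1223_def c1221[symmetric] c1223[symmetric] by simp
  also have "\<dots> = 1 + (n - 1) * 2 ^ (n - 2)" using card_XB[of n] closedB'[of k] k by simp
  finally show ?thesis using A by simp
qed

end
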